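(* Let $n\ge 2$ be an integer and $K=L=T=n^2$. Then every degree table $(\alpha,\beta)\in\mathcal{A}(K,L,T)$ satisfies $\operatorname{N}(\alpha,\beta)\ge n^4+3n^2$. Moreover, letting $G(n)$ denote the number of distinct integers in $\operatorname{Set}(\alpha)+\operatorname{Set}(\beta)$ for the $\mathsf{GASP}_n$ vectors with $K=L=T=n^2$, one has $G(n)/(n^4+3n^2)<1.38$ for all $n\ge 2$ and $G(n)/(n^4+3n^2)\to 1$ as $n\to\infty$; in particular $\mathsf{GASP}_n$ is asymptotically optimal, i.e. $G(n)/\min_{(\alpha,\beta)\in\mathcal{A}(n^2,n^2,n^2)}\operatorname{N}(\alpha,\beta)\to 1$.
   Context: A degree table with parameters $K,L,T$ is a tuple $(\alpha_{\mathrm p},\alpha_{\mathrm s},\beta_{\mathrm p},\beta_{\mathrm s})$ of nonnegative integer vectors of lengths $K,T,L,T$ such that, with $\alpha=(\alpha_{\mathrm p}\mid\alpha_{\mathrm s})$, $\beta=(\beta_{\mathrm p}\mid\beta_{\mathrm s})$: entries of $\alpha$ are distinct; entries of $\beta$ are distinct; for every $n\in\operatorname{Set}(\alpha_{\mathrm p})+\operatorname{Set}(\beta_{\mathrm p})$ there is a unique $i\in\operatorname{Set}(\alpha)$ and unique $j\in\operatorname{Set}(\beta)$ with $n=i+j$. $\mathcal{A}(K,L,T)$ is the set of these, $\operatorname{N}(\alpha,\beta)=|\operatorname{Set}(\alpha)+\operatorname{Set}(\beta)|$, $\operatorname{Set}(v)$ is the set of entries of $v$, $A+B=\{a+b\}$.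 The code $\mathsf{GASP}_r$ ($L\le K$, $1\le r\le\min\{K,T\}$): $\alpha_{\mathrm p}=(0,1,\ldots,K-1)$; $\alpha_{\mathrm s}$ = the $T$ smallest elements of $\{KL+j+Kt: 0\le j\le r-1, t\in\mathbb{Z}_{\ge0}\}$ in increasing order; $\beta_{\mathrm p}=(0,K,\ldots,K(L-1))$; $\beta_{\mathrm s}=(KL,\ldots,KL+T-1)$. *)

theory Defs
  imports Complex_Main
begin

definition sumset :: "nat set \<Rightarrow> nat set \<Rightarrow> nat set" where
  "sumset A B = {a + b | a b. a \<in> A \<and> b \<in> B}"

definition is_degree_table ::
  "nat \<Rightarrow> nat \<Rightarrow> nat \<Rightarrow> nat list \<Rightarrow> nat list \<Rightarrow> nat list \<Rightarrow> nat list \<Rightarrow> bool" where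
  "is_degree_table K L T ap as bp bs \<longleftrightarrow>
     length ap = K \<and> length as = T \<and> length bp = L \<and> length bs = T \<and>
     distinct (ap @ as) \<and> distinct (bp @ bs) \<and>
     (\<forall>n \<in> sumset (set ap) (set bp).
        \<exists>!p. p \<in> set (ap @ as) \<times> set (bp @ bs) \<and> fst p + snd p = n)"

definition NN :: "nat list \<Rightarrow> nat list \<Rightarrow> nat" where
  "NN \<alpha> \<beta> = card (sumset (set \<alpha>) (set \<beta>))"

definition minN :: "nat \<Rightarrow> nat \<Rightarrow> nat \<Rightarrow> nat" where
  "minN K L T = Min {NN (ap @ as) (bp @ bs) | ap as bp bs. is_degree_table K L T ap as bp bs}"

definition gasp_S :: "nat \<Rightarrow> nat \<Rightarrow> nat \<Rightarrow> nat set" where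
  "gasp_S K L r = {K * L + j + K * t | j t. j \<le> r - 1}"

definition gasp_ap :: "nat \<Rightarrow> nat list" where
  "gasp_ap K = [0..<K]"

text \<open>The T smallest elements of gasp_S, in increasing order.\<close>
definition gasp_as :: "nat \<Rightarrow> nat \<Rightarrow> nat \<Rightarrow> nat \<Rightarrow> nat list" where
  "gasp_as K L T r = sorted_list_of_set
     {x \<in> gasp_S K L r. card {y \<in> gasp_S K L r. y < x} < T}"

definition gasp_bp :: "nat \<Rightarrow> nat \<Rightarrow> nat list" where
  "gasp_bp K L = map (\<lambda>i. K * i) [0..<L]"

definition gasp_bs :: "nat \<Rightarrow> nat \<Rightarrow> nat \<Rightarrow> nat list" where
  "gasp_bs K L T = [K * L..<K * L + T]"

definition G :: "nat \<Rightarrow> nat" where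
  "G n = NN (gasp_ap (n^2) @ gasp_as (n^2) (n^2) (n^2) n)
            (gasp_bp (n^2) (n^2) @ gasp_bs (n^2) (n^2) (n^2))"

end

theory Submission
  imports Defs
begin

lemma sumset_alt: "sumset A B = (\<lambda>(a,b). a+b) ` (A \<times> B)"
  by (auto simp: sumset_def)

lemma sumset_comm: "sumset A B = sumset B A"
  unfolding sumset_def by (auto, metis add.commute, metis add.commute)

lemma ap_lemma:
  fixes X :: "nat set"
  assumes fin: "finite X" and ne: "X \<noteq> {}" and d: "d > 0"
    and cl: "\<And>x. x \<in> X \<Longrightarrow> x \<noteq> Max X \<Longrightarrow> x + d \<in> X"
  shows "X = (\<lambda>j. Min X + j*d) ` {..<card X}"
proof -
  define a where "a = Min X"
  define M where "M = Max X"
  have aX: "a \<in> X" using fin ne a_def by simp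
  have MX: "M \<in> X" using fin ne M_def by simp
  have le: "\<And>x. x \<in> X \<Longrightarrow> a \<le> x \<and> x \<le> M" using fin a_def M_def by simp
  have i: "\<exists>j. M = x + j*d" if "x \<in> X" for x
    using that
  proof (induction "M - x" arbitrary: x rule: less_induct)
    case less
    show ?case
    proof (cases "x = M")
      case True then show ?thesis by (rule_tac x=0 in exI) simp
    next
      case False
      have xd: "x + d \<in> X" using cl[OF less.prems] False M_def by simp
      have "x < M" using le[OF less.prems] False by simp
      moreover have "x + d \<le> M" using le[OF xd] by simp
      ultimately have "M - (x + d) < M - x" using d by simp
      from less.hyps[OF this xd] obtain j where "M = x + d + j*d" by blast
      then show ?thesis by (rule_tac x="Suc j" in exI) simp
    qed
  qed
  have ii: "a + j*d \<le> M \<Longrightarrow> a + j*d \<in> X" for j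
  proof (induction j)
    case 0 then show ?case using aX by simp
  next
    case (Suc j)
    have h: "a + j*d < M" using Suc.prems d by simp
    then have "a + j*d \<in> X" using Suc.IH by simp
    moreover have "a + j*d \<noteq> Max X" using h M_def by simp
    ultimately have "a + j*d + d \<in> X" using cl by blast
    then show ?case by (simp add: algebra_simps)
  qed
  obtain J where J: "M = a + J*d" using i[OF aX] by blast
  have eq: "X = (\<lambda>j. a + j*d) ` {..<Suc J}"
  proof
    show "X \<subseteq> (\<lambda>j. a + j*d) ` {..<Suc J}"
    proof
      fix x assume xX: "x \<in> X"
      obtain j where j: "M = x + j*d" using i[OF xX] by blast
      have "a \<le> x" using le[OF xX] by simp
      then have "j*d \<le> J*d" using j J by linarith
      then have jJ: "j \<le> J" using d by simp
      have "x = a + (J - j)*d" using j J jJ by (simp add: diff_mult_distrib)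
      then show "x \<in> (\<lambda>j. a + j*d) ` {..<Suc J}" by auto
    qed
  next
    show "(\<lambda>j. a + j*d) ` {..<Suc J} \<subseteq> X"
    proof
      fix y assume "y \<in> (\<lambda>j. a + j*d) ` {..<Suc J}"
      then obtain j where j1: "j < Suc J" and j2: "y = a + j*d" by blast
      have "j*d \<le> J*d" using j1 by simp
      then show "y \<in> X" using ii J j2 by simp
    qed
  qed
  have "inj_on (\<lambda>j. a + j*d) {..<Suc J}" using d by (auto simp: inj_on_def)
  then have c: "card X = Suc J" using eq card_image[of "\<lambda>j. a + j*d" "{..<Suc J}"] by simp
  moreover have mx: "Min X = a" by (simp add: a_def)
  ultimately show ?thesis by (simp only:) (rule eq)
qed

lemma key_lemma:
  fixes X Y :: "nat set"
  assumes fX: "finite X" and fY: "finite Y" and ne: "X \<noteq> {}" and cY: "card Y \<ge> 2"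
  shows "card (sumset X Y) \<ge> card X + card Y \<or>
    (\<exists>a d y1 y2. y1 \<in> Y \<and> y2 \<in> Y \<and> y1 < y2 \<and> d = y2 - y1 \<and>
        X = (\<lambda>j. a + j*d) ` {..<card X})"
proof -
  define c1 where "c1 = Min Y"
  define c2 where "c2 = Min (Y - {c1})"
  define M where "M = Max X"
  have neY: "Y \<noteq> {}" using cY by auto
  have c1Y: "c1 \<in> Y" using fY neY c1_def by simp
  have ne2: "Y - {c1} \<noteq> {}"
  proof
    assume "Y - {c1} = {}"
    then have "Y \<subseteq> {c1}" by blast
    then have "card Y \<le> 1" using card_mono[of "{c1}" Y] by simp
    then show False using cY by simp
  qed
  have c2Y: "c2 \<in> Y - {c1}" unfolding c2_def using fY ne2 by (intro Min_in) auto
  have c12: "c1 < c2" using c2Y c1_def fY by (metis DiffE Min_le order_le_neq_trans singletonI)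
  have c2min: "\<And>y. y \<in> Y \<Longrightarrow> y < c2 \<Longrightarrow> y = c1"
    using fY c2_def by (metis Diff_iff Min_le finite_Diff not_le singletonD)
  have MX: "M \<in> X" using fX ne M_def by simp
  have Mle: "\<And>x. x \<in> X \<Longrightarrow> x \<le> M" using fX M_def by simp
  have c1le: "\<And>y. y \<in> Y \<Longrightarrow> c1 \<le> y" using fY c1_def by simp
  define C1 where "C1 = (\<lambda>x. x + c1) ` X"
  define C2 where "C2 = (\<lambda>y. M + y) ` Y"
  have cC1: "card C1 = card X" unfolding C1_def by (rule card_image) (auto simp: inj_on_def)
  have cC2: "card C2 = card Y" unfolding C2_def by (rule card_image) (auto simp: inj_on_def)
  have int: "C1 \<inter> C2 = {M + c1}"
  proof
    show "C1 \<inter> C2 \<subseteq> {M + c1}"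
    proof
      fix z assume "z \<in> C1 \<inter> C2"
      then obtain x y where "x \<in> X" "y \<in> Y" "z = x + c1" "z = M + y" unfolding C1_def C2_def by blast
      with Mle c1le show "z \<in> {M + c1}"
        by (metis add_le_cancel_left add_le_mono antisym le_add_diff_inverse2 singletonI)
    qed
    show "{M + c1} \<subseteq> C1 \<inter> C2" using MX c1Y unfolding C1_def C2_def by auto
  qed
  have fC: "finite C1" "finite C2" using fX fY unfolding C1_def C2_def by auto
  have cU: "card (C1 \<union> C2) + 1 = card X + card Y"
    using card_Un_Int[OF fC] int cC1 cC2 by simp
  have sub: "C1 \<union> C2 \<subseteq> sumset X Y" using MX c1Y unfolding C1_def C2_def sumset_def by blast
  have fS: "finite (sumset X Y)" unfolding sumset_alt using fX fY by simp
  show ?thesis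
  proof (cases "\<exists>x\<in>X. x \<noteq> M \<and> x + c2 \<notin> C1")
    case True
    then obtain x where xX: "x \<in> X" and xM: "x \<noteq> M" and xC1: "x + c2 \<notin> C1" by blast
    have xlt: "x < M" using Mle[OF xX] xM by simp
    have "x + c2 \<notin> C2"
    proof
      assume "x + c2 \<in> C2"
      then obtain y where yY: "y \<in> Y" and e: "x + c2 = M + y" unfolding C2_def by blast
      then have "y < c2" using xlt by simp
      then have "y = c1" using c2min yY by simp
      then have "x + c2 \<in> C1" using e MX unfolding C1_def by auto
      then show False using xC1 by simp
    qed
    then have nin: "x + c2 \<notin> C1 \<union> C2" using xC1 by simp
    have "insert (x + c2) (C1 \<union> C2) \<subseteq> sumset X Y"
      using sub xX c2Y unfolding sumset_def by blast
    then have "card (insert (x + c2) (C1 \<union> C2)) \<le> card (sumset X Y)"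
      using card_mono fS by blast
    then have "card X + card Y \<le> card (sumset X Y)" using nin fC cU by simp
    then show ?thesis by simp
  next
    case False
    have cl: "x + (c2 - c1) \<in> X" if "x \<in> X" "x \<noteq> Max X" for x
    proof -
      have "x + c2 \<in> C1" using False that M_def by blast
      then obtain x' where "x' \<in> X" "x + c2 = x' + c1" unfolding C1_def by blast
      moreover have "x + (c2 - c1) = x'" using calculation c12 by simp
      ultimately show ?thesis by simp
    qed
    have "X = (\<lambda>j. Min X + j*(c2 - c1)) ` {..<card X}"
      by (rule ap_lemma[OF fX ne _ cl]) (use c12 in auto)
    then show ?thesis using c1Y c2Y c12 by blast
  qed
qed

lemma lower_bound:
  assumes dt: "is_degree_table m m m ap as bp bs" and m4: "m \<ge> 4"
  shows "NN (ap @ as) (bp @ bs) \<ge> m*m + 3*m"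
proof -
  define A where "A = set (ap @ as)"
  define B where "B = set (bp @ bs)"
  have len: "length ap = m" "length as = m" "length bp = m" "length bs = m"
    and dA: "distinct (ap @ as)" and dB: "distinct (bp @ bs)"
    and uniq: "\<And>z. z \<in> sumset (set ap) (set bp) \<Longrightarrow>
        \<exists>!p. p \<in> A \<times> B \<and> fst p + snd p = z"
    using dt unfolding is_degree_table_def A_def B_def by auto
  have cAp: "card (set ap) = m" using dA len distinct_card by fastforce
  have cAs: "card (set as) = m" using dA len distinct_card by fastforce
  have cBp: "card (set bp) = m" using dB len distinct_card by fastforce
  have cBs: "card (set bs) = m" using dB len distinct_card by fastforce
  have cA: "card A = 2*m" unfolding A_def using dA len distinct_card by fastforce
  have cB: "card B = 2*m" unfolding B_def using dB len distinct_card by fastforce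
  have dispA: "set ap \<inter> set as = {}" using dA by simp
  have dispB: "set bp \<inter> set bs = {}" using dB by simp
  have fA: "finite A" and fB: "finite B" unfolding A_def B_def by auto
  define P where "P = sumset (set ap) (set bp)"
  define R where "R = sumset A (set bs) \<union> sumset (set as) B"
  have injP: "inj_on (\<lambda>(a,b). a+b) (set ap \<times> set bp)"
  proof (rule inj_onI, clarsimp)
    fix a b a' b' assume h: "a \<in> set ap" "b \<in> set bp" "a' \<in> set ap" "b' \<in> set bp" "a + b = a' + b'"
    have "a + b \<in> P" using h unfolding P_def sumset_def by blast
    then have "\<exists>!p. p \<in> A \<times> B \<and> fst p + snd p = a + b" using uniq P_def by simp
    moreover have "(a,b) \<in> A \<times> B" "(a',b') \<in> A \<times> B" using h unfolding A_def B_def by auto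
    ultimately have "(a,b) = (a',b')" using h(5) by (metis fst_conv snd_conv)
    then show "a = a' \<and> b = b'" by simp
  qed
  have cP: "card P = m*m" unfolding P_def sumset_alt using card_image[OF injP] cAp cBp
    by (simp add: card_cartesian_product)
  have disj: "P \<inter> R = {}"
  proof (rule ccontr)
    assume "P \<inter> R \<noteq> {}"
    then obtain z where zP: "z \<in> P" and zR: "z \<in> R" by blast
    obtain a b where ab: "a \<in> set ap" "b \<in> set bp" "z = a + b" using zP unfolding P_def sumset_def by blast
    obtain x y where xy: "x \<in> A" "y \<in> B" "z = x + y" "x \<in> set as \<or> y \<in> set bs"
      using zR unfolding R_def sumset_def A_def B_def by auto
    have "\<exists>!p. p \<in> A \<times> B \<and> fst p + snd p = z" using uniq zP P_def by simp
    moreover have "(a,b) \<in> A \<times> B" using ab unfolding A_def B_def by auto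
    ultimately have "(a,b) = (x,y)" using xy ab by (metis fst_conv snd_conv mem_Times_iff)
    then show False using xy(4) ab dispA dispB by auto
  qed
  have fS: "finite (sumset A B)" unfolding sumset_alt using fA fB by simp
  have PRsub: "P \<union> R \<subseteq> sumset A B" unfolding P_def R_def A_def B_def sumset_def by auto
  have fP: "finite P" and fR: "finite R" using PRsub fS finite_subset by auto
  have NNeq: "NN (ap @ as) (bp @ bs) = card (sumset A B)" unfolding NN_def A_def B_def by simp
  have NNge: "card P + card R \<le> card (sumset A B)"
    using card_Un_disjoint[OF fP fR disj] card_mono[OF fS PRsub] by simp
  have Rsub1: "sumset A (set bs) \<subseteq> R" and Rsub2: "sumset B (set as) \<subseteq> R"
    unfolding R_def using sumset_comm by auto
  have "card R \<ge> 3*m"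
  proof (rule ccontr)
    assume small: "\<not> card R \<ge> 3*m"
    have neA: "A \<noteq> {}" using cA m4 by auto
    have neB: "B \<noteq> {}" using cB m4 by auto
    have k1: "card (sumset A (set bs)) \<ge> card A + card (set bs) \<or>
      (\<exists>a d y1 y2. y1 \<in> set bs \<and> y2 \<in> set bs \<and> y1 < y2 \<and> d = y2 - y1 \<and>
        A = (\<lambda>j. a + j*d) ` {..<card A})"
      by (rule key_lemma[OF fA _ neA]) (use cBs m4 in auto)
    have k2: "card (sumset B (set as)) \<ge> card B + card (set as) \<or>
      (\<exists>a d y1 y2. y1 \<in> set as \<and> y2 \<in> set as \<and> y1 < y2 \<and> d = y2 - y1 \<and>
        B = (\<lambda>j. a + j*d) ` {..<card B})"
      by (rule key_lemma[OF fB _ neB]) (use cAs m4 in auto)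
    have n1: "\<not> card (sumset A (set bs)) \<ge> card A + card (set bs)"
      using card_mono[OF fR Rsub1] small cA cBs by simp
    have n2: "\<not> card (sumset B (set as)) \<ge> card B + card (set as)"
      using card_mono[OF fR Rsub2] small cB cAs by simp
    obtain a d y1 y2 where A1: "y1 \<in> set bs" "y2 \<in> set bs" "y1 < y2" "d = y2 - y1"
        and Aeq: "A = (\<lambda>j. a + j*d) ` {..<2*m}" using k1 n1 cA by auto
    obtain b e x1 x2 where B1: "x1 \<in> set as" "x2 \<in> set as" "x1 < x2" "e = x2 - x1"
        and Beq: "B = (\<lambda>j. b + j*e) ` {..<2*m}" using k2 n2 cB by auto
    have "x1 \<in> A" "x2 \<in> A" using B1 unfolding A_def by auto
    then obtain i1 i2 where "x1 = a + i1*d" "x2 = a + i2*d" using Aeq by auto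
    then have "e = (i2 - i1)*d" using B1 by (simp add: diff_mult_distrib)
    then have de: "d dvd e" by simp
    have "y1 \<in> B" "y2 \<in> B" using A1 unfolding B_def by auto
    then obtain j1 j2 where "y1 = b + j1*e" "y2 = b + j2*e" using Beq by auto
    then have "d = (j2 - j1)*e" using A1 by (simp add: diff_mult_distrib)
    then have ed: "e dvd d" by simp
    have "d = e" using de ed by (simp add: dvd_antisym)
    then have "sumset A B \<subseteq> (\<lambda>k. a + b + k*d) ` {..<4*m}"
    proof -
      assume de: "d = e"
      show ?thesis
      proof
        fix z assume "z \<in> sumset A B"
        then obtain i j where ij: "i < 2*m" "j < 2*m" "z = (a + i*d) + (b + j*e)"
          unfolding sumset_def Aeq Beq by blast
        then have "i + j < 4*m" by simp
        moreover have "z = a + b + (i+j)*d" using ij de by (simp add: algebra_simps)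
        ultimately show "z \<in> (\<lambda>k. a + b + k*d) ` {..<4*m}" by blast
      qed
    qed
    then have "card (sumset A B) \<le> 4*m" using card_image_le[of "{..<4*m}" "\<lambda>k. a + b + k*d"]
      card_mono by (metis card_lessThan finite_imageI finite_lessThan order_trans)
    moreover have "m*m \<ge> 4*m" using m4 by simp
    moreover have "card (sumset A B) \<ge> m*m" using NNge cP by simp
    moreover have "card R > 0"
    proof -
      obtain x where x: "x \<in> A" using neA by blast
      have "set bs \<noteq> {}" using cBs m4 by auto
      then obtain y where y: "y \<in> set bs" by (metis ex_in_conv)
      have "x + y \<in> R" using x y Rsub1 unfolding sumset_def by blast
      then show ?thesis using fR card_gt_0_iff by blast
    qed
    ultimately show False using NNge cP by linarith
  qed
  then show ?thesis using NNge NNeq cP by simp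
qed


lemma div_mod_eq:
  fixes m j t j' t' :: nat
  assumes "j < m" "j' < m" "j + m*t = j' + m*t'"
  shows "j = j' \<and> t = t'"
proof -
  have e1: "(j + m*t) mod m = j" using assms(1) by simp
  have e2: "(j' + m*t') mod m = j'" using assms(2) by simp
  have jj: "j = j'" using e1 e2 assms(3) by metis
  then have "m*t = m*t'" using assms by simp
  moreover have "m > 0" using assms by simp
  ultimately show ?thesis using jj by simp
qed

lemma gasp_as_props:
  assumes n2: "n \<ge> 2" and m: "m = n^2"
  shows "set (gasp_as m m m n) = (\<lambda>(j,t). m*m + j + m*t) ` ({..<n}\<times>{..<n})"
    and "length (gasp_as m m m n) = m"
proof -
  define E where "E = (\<lambda>(j,t). m*m + j + m*t) ` ({..<n}\<times>{..<n})"
  define S where "S = gasp_S m m n"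
  have S_eq: "S = {m*m + j + m*t | j t. j < n}" unfolding S_def gasp_S_def using n2 by force
  have mn: "m = n*n" using m by (simp add: power2_eq_square)
  have nm: "n \<le> m" using mn n2 by simp
  have injE: "inj_on (\<lambda>(j,t). m*m + j + m*t) ({..<n}\<times>{..<n})"
  proof (rule inj_onI, clarsimp)
    fix j t j' t' assume h: "j < n" "t < n" "j' < n" "t' < n" "j + m*t = j' + m*t'"
    show "j = j' \<and> t = t'" by (rule div_mod_eq[of j m j' t t']) (use h nm in auto)
  qed
  have cE: "card E = m" unfolding E_def using card_image[OF injE] mn by (simp add: card_cartesian_product)
  have fE: "finite E" unfolding E_def by simp
  have ES: "E \<subseteq> S" unfolding E_def S_eq by auto
  have bound: "m*m + j + m*t < m*m + m*t'" if "j < n" "t < t'" for j t t'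
  proof -
    have "m*(t+1) \<le> m*t'" using that by (intro mult_le_mono2) simp
    then show ?thesis using that nm by (simp add: algebra_simps)
  qed
  have F_eq: "{x \<in> S. card {y \<in> S. y < x} < m} = E"
  proof
    show "{x \<in> S. card {y \<in> S. y < x} < m} \<subseteq> E"
    proof clarify
      fix x assume xS: "x \<in> S" and c: "card {y \<in> S. y < x} < m"
      obtain j t where jt: "j < n" "x = m*m + j + m*t" using xS S_eq by blast
      show "x \<in> E"
      proof (cases "t < n")
        case True then show ?thesis using jt unfolding E_def by auto
      next
        case False
        have "E \<subseteq> {y \<in> S. y < x}"
        proof
          fix y assume "y \<in> E"
          then obtain j' t' where "j' < n" "t' < n" "y = m*m + j' + m*t'" unfolding E_def by auto
          moreover have "t' < t" using False calculation by simp
          ultimately have "y < x" using bound jt by fastforce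
          then show "y \<in> {y \<in> S. y < x}" using \<open>y \<in> E\<close> ES by auto
        qed
        moreover have "finite {y \<in> S. y < x}" by (rule finite_subset[of _ "{..<x}"]) auto
        ultimately have "card E \<le> card {y \<in> S. y < x}" using card_mono by blast
        then show ?thesis using c cE by simp
      qed
    qed
    show "E \<subseteq> {x \<in> S. card {y \<in> S. y < x} < m}"
    proof
      fix x assume xE: "x \<in> E"
      then obtain j t where jt: "j < n" "t < n" "x = m*m + j + m*t" unfolding E_def by auto
      have sub: "{y \<in> S. y < x} \<subseteq> E - {x}"
      proof
        fix y assume "y \<in> {y \<in> S. y < x}"
        then obtain j' t' where y: "j' < n" "y = m*m + j' + m*t'" "y < x" using S_eq by auto
        have "t' < n"
        proof (rule ccontr)
          assume "\<not> t' < n"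
          then have "t < t'" using jt by simp
          then have "x < y" using bound[of j t t'] jt y by simp
          then show False using y by simp
        qed
        then show "y \<in> E - {x}" using y unfolding E_def by auto
      qed
      have "card {y \<in> S. y < x} \<le> card (E - {x})" using card_mono[OF _ sub] fE by simp
      also have "\<dots> < m" using cE xE fE m n2 by (simp add: card_Diff_singleton)
      finally show "x \<in> {x \<in> S. card {y \<in> S. y < x} < m}" using xE ES by auto
    qed
  qed
  have ga: "gasp_as m m m n = sorted_list_of_set E" unfolding gasp_as_def F_eq[unfolded S_def] ..
  show "set (gasp_as m m m n) = (\<lambda>(j,t). m*m + j + m*t) ` ({..<n}\<times>{..<n})"
    using ga fE E_def by simp
  show "length (gasp_as m m m n) = m" using ga fE cE by simp
qed


lemma gasp_sets:
  "set (gasp_ap m) = {..<m}"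
  "set (gasp_bp m m) = (\<lambda>i. m*i) ` {..<m}"
  "set (gasp_bs m m m) = {m*m..<m*m+m}"
  unfolding gasp_ap_def gasp_bp_def gasp_bs_def by auto

lemma gasp_dt:
  assumes n2: "n \<ge> 2" and m: "m = n^2"
  shows "is_degree_table m m m (gasp_ap m) (gasp_as m m m n) (gasp_bp m m) (gasp_bs m m m)"
proof -
  have mn: "m = n*n" using m by (simp add: power2_eq_square)
  have nm: "n \<le> m" using mn n2 by simp
  have m0: "m > 0" using nm n2 by simp
  define E where "E = (\<lambda>(j,t). m*m + j + m*t) ` ({..<n}\<times>{..<n})"
  have sE: "set (gasp_as m m m n) = E" using gasp_as_props[OF n2 m] E_def by simp
  have lE: "length (gasp_as m m m n) = m" using gasp_as_props[OF n2 m] by simp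
  have Ege: "\<And>x. x \<in> E \<Longrightarrow> x \<ge> m*m" unfolding E_def by auto
  have l1: "length (gasp_ap m) = m" "length (gasp_bp m m) = m" "length (gasp_bs m m m) = m"
    unfolding gasp_ap_def gasp_bp_def gasp_bs_def by auto
  have dAs: "distinct (gasp_as m m m n)" unfolding gasp_as_def by simp
  have d1: "distinct (gasp_ap m @ gasp_as m m m n)"
  proof -
    have mm: "m \<le> m*m" using m0 by simp
    have "set (gasp_ap m) \<inter> set (gasp_as m m m n) = {}"
    proof (rule ccontr)
      assume "set (gasp_ap m) \<inter> set (gasp_as m m m n) \<noteq> {}"
      then obtain x where "x \<in> set (gasp_ap m)" "x \<in> set (gasp_as m m m n)" by blast
      then have "x < m" "x \<in> E" using sE gasp_sets(1) by simp_all
      then show False using Ege[of x] mm by linarith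
    qed
    then show ?thesis using dAs unfolding gasp_ap_def by simp
  qed
  have d2: "distinct (gasp_bp m m @ gasp_bs m m m)"
  proof -
    have "inj_on (\<lambda>i. m*i) {0..<m}" using m0 by (auto simp: inj_on_def)
    then have "distinct (gasp_bp m m)" unfolding gasp_bp_def by (simp add: distinct_map)
    moreover have "set (gasp_bp m m) \<inter> set (gasp_bs m m m) = {}"
      unfolding gasp_sets using m0 by auto
    ultimately show ?thesis unfolding gasp_bs_def by simp
  qed
  have uq: "\<exists>!p. p \<in> set (gasp_ap m @ gasp_as m m m n) \<times> set (gasp_bp m m @ gasp_bs m m m)
              \<and> fst p + snd p = z"
    if z: "z \<in> sumset (set (gasp_ap m)) (set (gasp_bp m m))" for z
  proof -
    obtain a i where ai: "a < m" "i < m" "z = a + m*i" using z unfolding sumset_def gasp_sets by auto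
    have "m*(i+1) \<le> m*m" using ai by (intro mult_le_mono2) simp
    then have zlt: "z < m*m" using ai by simp
    show ?thesis
    proof (rule ex1I[of _ "(a, m*i)"])
      show "(a, m*i) \<in> set (gasp_ap m @ gasp_as m m m n) \<times> set (gasp_bp m m @ gasp_bs m m m)
              \<and> fst (a, m*i) + snd (a, m*i) = z" using ai gasp_sets by auto
    next
      fix p assume p: "p \<in> set (gasp_ap m @ gasp_as m m m n) \<times> set (gasp_bp m m @ gasp_bs m m m)
              \<and> fst p + snd p = z"
      obtain x y where pxy: "p = (x,y)" by (cases p)
      have xin: "x \<in> {..<m} \<union> E" using p pxy sE gasp_sets(1) by simp
      have yin: "y \<in> (\<lambda>i. m*i) ` {..<m} \<union> {m*m..<m*m+m}" using p pxy gasp_sets(2,3) by simp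
      have sum: "x + y = z" using p pxy by simp
      have xm: "x < m"
      proof (rule ccontr)
        assume "\<not> x < m"
        then have "x \<in> E" using xin by simp
        then show False using Ege[of x] sum zlt by linarith
      qed
      have "y \<notin> {m*m..<m*m+m}" using sum zlt by auto
      then obtain i' where i': "i' < m" "y = m*i'" using yin by blast
      have "x = a \<and> i' = i" by (rule div_mod_eq) (use xm ai i' sum in auto)
      then show "p = (a, m*i)" using pxy i' by simp
    qed
  qed
  show ?thesis unfolding is_degree_table_def using l1 lE d1 d2 uq by simp
qed

lemma G_upper:
  assumes n2: "n \<ge> 2"
  shows "G n + n + 2 \<le> n^4 + 2*n^3 + 2*n^2"
proof -
  define m where "m = n^2"
  have mn: "m = n*n" using m_def by (simp add: power2_eq_square)
  have nm: "n + 2 \<le> m"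
  proof -
    have "2*n \<le> n*n" using mult_le_mono1[OF n2, of n] by simp
    then show ?thesis using mn n2 by linarith
  qed
  define E where "E = (\<lambda>(j,t). m*m + j + m*t) ` ({..<n}\<times>{..<n})"
  have sE: "set (gasp_as m m m n) = E" using gasp_as_props[OF n2 m_def] E_def by simp
  have Gdef: "G n = card (sumset ({..<m} \<union> E) ((\<lambda>i. m*i) ` {..<m} \<union> {m*m..<m*m+m}))"
    unfolding G_def NN_def m_def[symmetric] using sE gasp_sets by simp
  define U1 where "U1 = {..< m*m+2*m-1}"
  define U2 where "U2 = (\<lambda>(j,u). m*m + j + m*u) ` ({..<n} \<times> {2..<m})"
  define U3 where "U3 = {2*m*m ..< 2*m*m + m*n + n - 1}"
  have sub: "sumset ({..<m} \<union> E) ((\<lambda>i. m*i) ` {..<m} \<union> {m*m..<m*m+m}) \<subseteq> U1 \<union> U2 \<union> U3"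
  proof
    fix z assume "z \<in> sumset ({..<m} \<union> E) ((\<lambda>i. m*i) ` {..<m} \<union> {m*m..<m*m+m})"
    then obtain x y where xy0: "z = x + y" "x \<in> {..<m} \<union> E" "y \<in> (\<lambda>i. m*i) ` {..<m} \<union> {m*m..<m*m+m}"
      unfolding sumset_def by blast
    have xy: "z = x + y" "x < m \<or> x \<in> E" "(\<exists>i<m. y = m*i) \<or> (m*m \<le> y \<and> y < m*m+m)"
      using xy0 by auto
    show "z \<in> U1 \<union> U2 \<union> U3"
    proof (cases "x < m")
      case xm: True
      show ?thesis
      proof (cases "\<exists>i<m. y = m*i")
        case True
        then obtain i where i: "i < m" "y = m*i" by blast
        have "m*(i+1) \<le> m*m" using i by (intro mult_le_mono2) simp
        then have "z < m*m" using xm i xy by simp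
        then have "z < m*m+2*m-1" using nm by linarith
        then show ?thesis unfolding U1_def by simp
      next
        case False
        then have "y < m*m+m" using xy by blast
        then have "z < m*m+2*m-1" using xm xy by linarith
        then show ?thesis unfolding U1_def by simp
      qed
    next
      case False
      then have "x \<in> E" using xy by blast
      then obtain j t where jt: "j < n" "t < n" "x = m*m + j + m*t" unfolding E_def by auto
      show ?thesis
      proof (cases "\<exists>i<m. y = m*i")
        case True
        then obtain i where i: "i < m" "y = m*i" by blast
        have zeq: "z = m*m + j + m*(t+i)" using xy jt i by (simp add: algebra_simps)
        show ?thesis
        proof (cases "t + i \<le> 1")
          case True
          have "m*(t+i) \<le> m*1" using True by (intro mult_le_mono2)
          then have "z < m*m+2*m-1" using zeq jt nm by linarith
          then show ?thesis unfolding U1_def by simp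
        next
          case False
          show ?thesis
          proof (cases "t + i < m")
            case True
            then have "z \<in> U2" unfolding U2_def using zeq jt False
              by (intro image_eqI[of _ _ "(j, t+i)"]) auto
            then show ?thesis by simp
          next
            case False
            have "m*m \<le> m*(t+i)" using False by (intro mult_le_mono2) simp
            moreover have "m*(t+i+2) \<le> m*(n+m)" using jt i by (intro mult_le_mono2) simp
            moreover have "m*(t+i+2) = m*(t+i) + 2*m" "m*(n+m) = m*n + m*m" "2*m*m = m*m + m*m"
              by (simp_all add: algebra_simps)
            ultimately have "2*m*m \<le> z" "z < 2*m*m + m*n + n - 1" using zeq jt nm
              by linarith+
            then show ?thesis unfolding U3_def by simp
          qed
        qed
      next
        case False
        then have y: "m*m \<le> y" "y < m*m+m" using xy by blast+
        have "m*(t+1) \<le> m*n" using jt by (intro mult_le_mono2) simp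
        moreover have "m*(t+1) = m*t + m" "2*m*m = m*m + m*m"
          by (simp_all add: algebra_simps)
        ultimately have "2*m*m \<le> z" "z < 2*m*m + m*n + n - 1" using xy jt y nm
          by linarith+
        then show ?thesis unfolding U3_def by simp
      qed
    qed
  qed
  have c1: "card U1 = m*m+2*m-1" unfolding U1_def by simp
  have c2: "card U2 \<le> n*(m-2)" unfolding U2_def
    using card_image_le[of "{..<n} \<times> {2..<m}" "\<lambda>(j,u). m*m + j + m*u"]
    by (simp add: card_cartesian_product)
  have c3: "card U3 = m*n + n - 1" unfolding U3_def by simp
  have fU: "finite (U1 \<union> U2 \<union> U3)" unfolding U1_def U2_def U3_def by simp
  have "G n \<le> card (U1 \<union> U2 \<union> U3)" unfolding Gdef using card_mono[OF fU sub] .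
  also have "\<dots> \<le> card (U1 \<union> U2) + card U3" by (rule card_Un_le)
  also have "\<dots> \<le> card U1 + card U2 + card U3" using card_Un_le[of U1 U2] by simp
  also have "\<dots> \<le> (m*m+2*m-1) + n*(m-2) + (m*n + n - 1)" using c1 c2 c3 by simp
  finally have g: "G n \<le> (m*m+2*m-1) + n*(m-2) + (m*n + n - 1)" .
  have "n*(m-2) + 2*n = n*m" using nm by (simp add: diff_mult_distrib2)
  moreover have "m*n = n*m" "2*m*n = n*m + n*m" by (simp_all add: algebra_simps)
  ultimately have "G n + n + 2 \<le> m*m + 2*m + 2*m*n" using g nm n2 by linarith
  also have "\<dots> = n^4 + 2*n^3 + 2*n^2"
  proof -
    have h1: "n^2*n^2 = n^4" by (simp flip: power_add)
    have h2: "2*n^2*n = 2*n^3" by (simp add: power2_eq_square power3_eq_cube)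
    show ?thesis unfolding m_def h1 h2 by (simp only: add_ac)
  qed
  finally show ?thesis .
qed


lemma n4: "(n::nat)^2 * n^2 = n^4" by (simp flip: power_add)

lemma part1:
  assumes "n \<ge> 2" "is_degree_table (n^2) (n^2) (n^2) ap as bp bs"
  shows "NN (ap @ as) (bp @ bs) \<ge> n^4 + 3 * n^2"
proof -
  have "n^2 \<ge> (2::nat)^2" using assms(1) by (rule power_mono) simp
  then have "n^2 \<ge> (4::nat)" by simp
  from lower_bound[OF assms(2) this] show ?thesis by (simp add: n4)
qed

lemma G_lower:
  assumes "n \<ge> 2" shows "G n \<ge> n^4 + 3 * n^2"
  unfolding G_def using part1[OF assms gasp_dt[OF assms refl]] .

lemma nat_ineq:
  assumes "(n::nat) \<ge> 2"
  shows "100*(n^4+2*n^3+2*n^2) < 138*(n^4+3*n^2) + 100*(n+2)"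
proof (cases "n \<le> 5")
  case True
  then have "n = 2 \<or> n = 3 \<or> n = 4 \<or> n = 5" using assms by auto
  then show ?thesis by auto
next
  case False
  then have "200 \<le> 38*n" by simp
  then have "200*n^3 \<le> 38*n*n^3" by (rule mult_le_mono1)
  moreover have "n*n^3 = n^4" by (simp flip: power_Suc)
  ultimately have "200*n^3 \<le> 38*n^4" by (simp add: mult.assoc)
  then show ?thesis by simp
qed

lemma gen_lin:
  fixes X Y g n :: nat
  assumes h1: "g + n + 2 \<le> X" and h2: "100*X < 138*Y + 100*(n+2)"
  shows "100*g < 138*Y"
proof -
  have "100*(g + n + 2) \<le> 100*X" using h1 by (rule mult_le_mono2)
  then show ?thesis using h2 by simp
qed

lemma G_ratio:
  assumes "n \<ge> 2"
  shows "real (G n) / real (n^4 + 3 * n^2) < 1.38"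
proof -
  have a: "G n + n + 2 \<le> n^4 + 2*n^3 + 2*n^2" by (rule G_upper[OF assms])
  have "100 * G n < 138*(n^4+3*n^2)" by (rule gen_lin[OF a nat_ineq[OF assms]])
  then have "real (100 * G n) < real (138*(n^4+3*n^2))" by (simp only: of_nat_less_iff)
  then have b: "real (G n) < 1.38 * real (n^4+3*n^2)" by simp
  have "real (n^4+3*n^2) > 0" using assms by (simp only: of_nat_0_less_iff) simp
  then show ?thesis using b by (simp add: divide_less_eq)
qed

lemma frac_helper:
  fixes a b c d :: real
  assumes "b > 0" "c > 0" "a*c \<le> b*d"
  shows "a/b \<le> d/c"
  using assms by (simp add: divide_simps mult.commute)

lemma ratio_lim: "(\<lambda>n. real (G n) / real (n^4 + 3 * n^2)) \<longlonglongrightarrow> 1"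
proof (rule tendsto_sandwich[of "\<lambda>_. 1" _ _ "\<lambda>n. 1 + 2 / real n"])
  show "\<forall>\<^sub>F n in sequentially. 1 \<le> real (G n) / real (n^4 + 3 * n^2)"
    using eventually_ge_at_top[of 2]
  proof eventually_elim
    case (elim n)
    have "real (n^4 + 3 * n^2) \<le> real (G n)" using G_lower[OF elim] by (simp only: of_nat_le_iff)
    moreover have "real (n^4 + 3 * n^2) > 0" using elim by (simp only: of_nat_0_less_iff) simp
    ultimately show ?case by simp
  qed
  show "\<forall>\<^sub>F n in sequentially. real (G n) / real (n^4 + 3 * n^2) \<le> 1 + 2 / real n"
    using eventually_ge_at_top[of 2]
  proof eventually_elim
    case (elim n)
    have g: "G n \<le> n^4 + 2*n^3 + 2*n^2" using G_upper[OF elim] by simp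
    have "G n * n \<le> (n^4 + 2*n^3 + 2*n^2) * n" using g by (rule mult_le_mono1)
    also have "\<dots> \<le> (n^4 + 3*n^2) * (n + 2)"
    proof -
      have "n^3 \<le> n^4 + 3*n^3 + 6*n^2" by simp
      then have "(n^4 + 2*n^3 + 2*n^2) * n + n^3 \<le> (n^4 + 3*n^2) * (n + 2) + n^3"
        by (simp add: algebra_simps power_numeral_reduce)
      then show ?thesis by simp
    qed
    finally have "real (G n * n) \<le> real ((n^4 + 3*n^2) * (n + 2))" by (simp only: of_nat_le_iff)
    then have h: "real (G n) * real n \<le> real (n^4 + 3*n^2) * real (n + 2)" by (simp only: of_nat_mult)
    have D: "real (n^4 + 3 * n^2) > 0" using elim by (simp only: of_nat_0_less_iff) simp
    have N: "real n > 0" using elim by simp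
    have "1 + 2 / real n = real (n + 2) / real n" using N by (simp add: field_simps)
    moreover have "real (G n) / real (n^4 + 3 * n^2) \<le> real (n + 2) / real n"
      by (rule frac_helper[OF D N]) (use h in \<open>simp add: mult.commute\<close>)
    ultimately show ?case by simp
  qed
  show "(\<lambda>_. 1::real) \<longlonglongrightarrow> 1" by simp
  show "(\<lambda>n. 1 + 2 / real n) \<longlonglongrightarrow> 1"
    using tendsto_add[OF tendsto_const[of "1::real"] lim_const_over_n[of "2::real"]] by simp
qed

lemma minN_bounds:
  assumes n2: "n \<ge> 2"
  shows "n^4 + 3*n^2 \<le> minN (n^2) (n^2) (n^2) \<and> minN (n^2) (n^2) (n^2) \<le> G n"
proof -
  define m where "m = n^2"
  define SS where "SS = {NN (ap @ as) (bp @ bs) | ap as bp bs. is_degree_table m m m ap as bp bs}"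
  have mdef: "minN m m m = Min SS" unfolding minN_def SS_def ..
  have GS: "G n \<in> SS" unfolding SS_def G_def m_def using gasp_dt[OF n2 refl] by blast
  have fin: "finite SS"
  proof (rule finite_subset[of _ "{..4*m*m}"])
    show "SS \<subseteq> {..4*m*m}"
    proof
      fix k assume "k \<in> SS"
      then obtain ap as bp bs where k: "k = NN (ap @ as) (bp @ bs)" and dt: "is_degree_table m m m ap as bp bs"
        unfolding SS_def by blast
      have l: "length (ap @ as) = 2*m" "length (bp @ bs) = 2*m" using dt unfolding is_degree_table_def by auto
      have "k \<le> card (set (ap @ as) \<times> set (bp @ bs))" unfolding k NN_def sumset_alt
        by (rule card_image_le) simp
      also have "\<dots> = card (set (ap @ as)) * card (set (bp @ bs))" by (rule card_cartesian_product)
      also have "\<dots> \<le> length (ap @ as) * length (bp @ bs)" by (intro mult_le_mono card_length)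
      finally show "k \<in> {..4*m*m}" using l by simp
    qed
  qed simp
  have "Min SS \<in> SS" using fin GS by (intro Min_in) auto
  then obtain ap as bp bs where e: "Min SS = NN (ap @ as) (bp @ bs)" and dt: "is_degree_table m m m ap as bp bs"
    unfolding SS_def by blast
  have lo: "n^4 + 3*n^2 \<le> Min SS" using e part1[OF n2 dt[unfolded m_def]] by simp
  have hi: "Min SS \<le> G n" using fin GS by simp
  show ?thesis using lo hi mdef m_def by simp
qed

lemma minN_lim: "(\<lambda>n. real (G n) / real (minN (n^2) (n^2) (n^2))) \<longlonglongrightarrow> 1"
proof (rule tendsto_sandwich[of "\<lambda>_. 1" _ _ "\<lambda>n. real (G n) / real (n^4 + 3 * n^2)"])
  show "\<forall>\<^sub>F n in sequentially. 1 \<le> real (G n) / real (minN (n^2) (n^2) (n^2))"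
    using eventually_ge_at_top[of 2]
  proof eventually_elim
    case (elim n)
    note b = minN_bounds[OF elim]
    have "real (minN (n^2) (n^2) (n^2)) \<le> real (G n)" using b by (simp only: of_nat_le_iff)
    moreover have "minN (n^2) (n^2) (n^2) > 0"
    proof -
      have "n^4 + 3*n^2 > 0" using elim by simp
      then show ?thesis using b by linarith
    qed
    then have "real (minN (n^2) (n^2) (n^2)) > 0" by simp
    ultimately show ?case by simp
  qed
  show "\<forall>\<^sub>F n in sequentially. real (G n) / real (minN (n^2) (n^2) (n^2)) \<le>
      real (G n) / real (n^4 + 3 * n^2)"
    using eventually_ge_at_top[of 2]
  proof eventually_elim
    case (elim n)
    note b = minN_bounds[OF elim]
    have "real (n^4 + 3*n^2) \<le> real (minN (n^2) (n^2) (n^2))" using b by (simp only: of_nat_le_iff)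
    moreover have "real (n^4 + 3*n^2) > 0" using elim by (simp only: of_nat_0_less_iff) simp
    ultimately show ?case by (intro divide_left_mono) auto
  qed
  show "(\<lambda>_. 1::real) \<longlonglongrightarrow> 1" by simp
  show "(\<lambda>n. real (G n) / real (n^4 + 3 * n^2)) \<longlonglongrightarrow> 1" by (rule ratio_lim)
qed

theorem corollary1:
  shows "(\<forall>n::nat. n \<ge> 2 \<longrightarrow> (\<forall>ap as bp bs.
            is_degree_table (n^2) (n^2) (n^2) ap as bp bs \<longrightarrow>
            NN (ap @ as) (bp @ bs) \<ge> n^4 + 3 * n^2))
       \<and> (\<forall>n::nat. n \<ge> 2 \<longrightarrow> real (G n) / real (n^4 + 3 * n^2) < 1.38)
       \<and> (\<lambda>n. real (G n) / real (n^4 + 3 * n^2)) \<longlonglongrightarrow> 1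
       \<and> (\<lambda>n. real (G n) / real (minN (n^2) (n^2) (n^2))) \<longlonglongrightarrow> 1"
  using part1 G_ratio ratio_lim minN_lim by blast

end
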